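(* Let $T\in\mathcal{B}(\mathcal{H})$ and let $T=A+iB$ be the Cartesian decomposition of $T$. Then for every $\theta\in\mathbb{R}$, \begin{equation*} \frac{1}{2}w(T)\leq w\left(\begin{bmatrix} 0 &A \\ e^{i\theta}B& 0 \end{bmatrix}\right)\leq w(T). \end{equation*}
   Context: $\mathcal{H}$ is a complex Hilbert space and $\mathcal{B}(\mathcal{H})$ is the $C^*$-algebra of all bounded linear operators on $\mathcal{H}$. For $T\in\mathcal{B}(\mathcal{H})$, $w(T)=\sup\{|\langle Tx,x\rangle|:\|x\|=1\}$ is the numerical radius. The Cartesian decomposition $T=A+iB$ has $A=\frac{T+T^*}{2}$ and $B=\frac{T-T^*}{2i}$ self-adjoint. A $2\times 2$ operator matrix with entries in $\mathcal{B}(\mathcal{H})$ is regarded as an operator on $\mathcal{H}\oplus\mathcal{H}$. *)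

theory Defs
  imports "HOL-Analysis.Analysis"
begin

class complex_inner = real_normed_vector +
  fixes scaleC :: "complex \<Rightarrow> 'a \<Rightarrow> 'a"
    and cinner :: "'a \<Rightarrow> 'a \<Rightarrow> complex"
  assumes scaleC_add_right: "scaleC a (x + y) = scaleC a x + scaleC a y"
    and scaleC_add_left: "scaleC (a + b) x = scaleC a x + scaleC b x"
    and scaleC_scaleC: "scaleC a (scaleC b x) = scaleC (a * b) x"
    and scaleC_one: "scaleC 1 x = x"
    and scaleC_of_real: "scaleC (complex_of_real r) x = scaleR r x"
    and cinner_conj: "cinner y x = cnj (cinner x y)"
    and cinner_add_left: "cinner (x + y) z = cinner x z + cinner y z"
    and cinner_scaleC_left: "cinner (scaleC c x) y = c * cinner x y"
    and cinner_self_nonneg: "0 \<le> Re (cinner x x)"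
    and cinner_self_eq_0: "cinner x x = 0 \<longleftrightarrow> x = 0"
    and norm_eq_sqrt_cinner: "norm x = sqrt (Re (cinner x x))"

class complex_hilbert = complex_inner + complete_space

definition bounded_clinear_op :: "('a::complex_inner \<Rightarrow> 'a) \<Rightarrow> bool" where
  "bounded_clinear_op f \<longleftrightarrow>
     (\<forall>x y. f (x + y) = f x + f y) \<and>
     (\<forall>c x. f (scaleC c x) = scaleC c (f x)) \<and>
     (\<exists>K. \<forall>x. norm (f x) \<le> K * norm x)"

definition selfadjoint_op :: "('a::complex_inner \<Rightarrow> 'a) \<Rightarrow> bool" where
  "selfadjoint_op A \<longleftrightarrow> (\<forall>x y. cinner (A x) y = cinner x (A y))"

text \<open>Numerical radius (the 0 is added only so that the trivial space gives 0;
  it does not change the supremum otherwise since all values are nonnegative).\<close>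
definition numrad :: "('a::complex_inner \<Rightarrow> 'a) \<Rightarrow> real" where
  "numrad T = Sup ({0} \<union> {cmod (cinner (T x) x) | x. norm x = 1})"

text \<open>The Hilbert direct sum H \<oplus> H, modelled on pairs.\<close>
definition cinner2 :: "'a::complex_inner \<times> 'a \<Rightarrow> 'a \<times> 'a \<Rightarrow> complex" where
  "cinner2 z w = cinner (fst z) (fst w) + cinner (snd z) (snd w)"

definition norm2 :: "'a::complex_inner \<times> 'a \<Rightarrow> real" where
  "norm2 z = sqrt ((norm (fst z))\<^sup>2 + (norm (snd z))\<^sup>2)"

text \<open>The 2x2 operator matrix [[P, Q], [R, S]] acting on H \<oplus> H.\<close>
definition block_op :: "('a::complex_inner \<Rightarrow> 'a) \<Rightarrow> ('a \<Rightarrow> 'a) \<Rightarrow> ('a \<Rightarrow> 'a) \<Rightarrow> ('a \<Rightarrow> 'a)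
    \<Rightarrow> 'a \<times> 'a \<Rightarrow> 'a \<times> 'a" where
  "block_op P Q R S z = (P (fst z) + Q (snd z), R (fst z) + S (snd z))"

definition numrad2 :: "('a::complex_inner \<times> 'a \<Rightarrow> 'a \<times> 'a) \<Rightarrow> real" where
  "numrad2 M = Sup ({0} \<union> {cmod (cinner2 (M z) z) | z. norm2 z = 1})"

end

theory Submission imports Defs begin

lemma mult_cnj_cmod: "z * cnj z = (complex_of_real (cmod z))^2"
  by (metis complex_norm_square of_real_power)
lemma cinner_add_right: "cinner x (y + z) = cinner x y + cinner (x::'a::complex_inner) z"
  by (metis cinner_conj cinner_add_left complex_cnj_add)
lemma cinner_scaleC_right: "cinner x (scaleC c y) = cnj c * cinner (x::'a::complex_inner) y"
  by (metis cinner_conj cinner_scaleC_left complex_cnj_mult complex_cnj_cnj)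
lemma cinner_zero_left[simp]: "cinner 0 (x::'a::complex_inner) = 0"
  by (metis add_cancel_right_left cinner_add_left add_0)
lemma cinner_zero_right[simp]: "cinner (x::'a::complex_inner) 0 = 0"
  by (metis cinner_conj cinner_zero_left complex_cnj_zero)
lemma scaleC_minus1: "scaleC (-1) (x::'a::complex_inner) = - x"
  by (metis scaleC_of_real of_real_1 of_real_minus scaleR_minus1_left)
lemma cinner_minus_left: "cinner (- x) (y::'a::complex_inner) = - cinner x y"
  by (metis scaleC_minus1 cinner_scaleC_left mult_minus1)
lemma cinner_minus_right: "cinner y (- x::'a::complex_inner) = - cinner y x"
  by (metis cinner_conj cinner_minus_left complex_cnj_minus)
lemma cinner_diff_left: "cinner (x - y) (z::'a::complex_inner) = cinner x z - cinner y z"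
  by (simp add: cinner_add_left cinner_minus_left diff_conv_add_uminus del: add_uminus_conv_diff)
lemma cinner_diff_right: "cinner z (x - y::'a::complex_inner) = cinner z x - cinner z y"
  by (simp add: cinner_add_right cinner_minus_right diff_conv_add_uminus del: add_uminus_conv_diff)
lemma cinner_self_real: "cinner x (x::'a::complex_inner) = complex_of_real ((norm x)^2)"
proof -
  have "Im (cinner x x) = Im (cnj (cinner x x))" using cinner_conj[of x x] by simp
  then have "Im (cinner x x) = 0" by simp
  then show ?thesis using cinner_self_nonneg[of x] norm_eq_sqrt_cinner[of x]
    by (simp add: complex_eq_iff)
qed
lemma norm_scaleC: "norm (scaleC c (x::'a::complex_inner)) = cmod c * norm x"
proof -
  have "complex_of_real ((norm (scaleC c x))^2) = c * cnj c * complex_of_real ((norm x)^2)"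
    by (metis cinner_self_real cinner_scaleC_left cinner_scaleC_right mult.assoc)
  also have "\<dots> = complex_of_real ((cmod c * norm x)^2)"
    by (simp add: mult_cnj_cmod power_mult_distrib mult.commute mult.left_commute)
  finally have "(norm (scaleC c x))^2 = (cmod c * norm x)^2" using of_real_eq_iff by blast
  then show ?thesis by (simp add: power2_eq_iff_nonneg)
qed
lemma cs_unit:
  assumes "norm (x::'a::complex_inner) = 1"
  shows "cmod (cinner u x) \<le> norm u"
proof -
  define c where "c = cinner u x"
  have "cinner (u - scaleC c x) (u - scaleC c x)
     = cinner u u - cnj c * c - c * cinner x u + c * cnj c * cinner x x"
    by (simp add: cinner_diff_left cinner_diff_right cinner_scaleC_left cinner_scaleC_right c_def algebra_simps)
  also have "\<dots> = complex_of_real ((norm u)^2 - (cmod c)^2)"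
    using assms cinner_self_real[of x] cinner_self_real[of u] cinner_conj[of x u]
    by (simp add: c_def mult_cnj_cmod mult.commute)
  finally have "0 \<le> (norm u)^2 - (cmod c)^2"
    by (metis cinner_self_real Re_complex_of_real zero_le_power2 of_real_eq_iff)
  then show ?thesis unfolding c_def
    by (metis abs_norm_cancel diff_ge_0_iff_ge norm_ge_zero power2_le_imp_le)
qed
lemma bcl_add: "bounded_clinear_op f \<Longrightarrow> f (x + y) = f x + f y"
  unfolding bounded_clinear_op_def by blast
lemma bcl_scaleC: "bounded_clinear_op f \<Longrightarrow> f (scaleC c x) = scaleC c (f x)"
  unfolding bounded_clinear_op_def by blast
lemma bcl_zero: "bounded_clinear_op f \<Longrightarrow> f 0 = 0"
  by (metis bcl_add add_cancel_right_right add_0)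
lemma bcl_minus: "bounded_clinear_op f \<Longrightarrow> f (- x) = - f x"
  by (metis bcl_scaleC scaleC_minus1)
lemma bcl_diff: "bounded_clinear_op f \<Longrightarrow> f (x - y) = f x - f y"
  by (metis bcl_add bcl_minus diff_conv_add_uminus)

lemma numrad_bdd:
  assumes "bounded_clinear_op T"
  shows "bdd_above ({0} \<union> {cmod (cinner (T x) x) | x. norm x = 1})"
proof -
  obtain K where K: "\<And>x. norm (T x) \<le> K * norm x"
    using assms unfolding bounded_clinear_op_def by blast
  have "\<forall>r \<in> {0} \<union> {cmod (cinner (T x) x) | x. norm x = 1}. r \<le> max 0 K"
  proof
    fix r assume "r \<in> {0} \<union> {cmod (cinner (T x) x) | x. norm x = 1}"
    then consider "r = 0" | x where "norm x = 1" "r = cmod (cinner (T x) x)" by blast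
    then show "r \<le> max 0 K"
    proof cases
      case 2
      then show ?thesis using cs_unit[of x "T x"] K[of x] by simp
    qed simp
  qed
  then show ?thesis by (meson bdd_above.I)
qed

lemma numrad_ge:
  assumes "bounded_clinear_op T" "norm x = 1"
  shows "cmod (cinner (T x) x) \<le> numrad T"
  unfolding numrad_def using assms numrad_bdd[OF assms(1)] by (intro cSup_upper) auto

lemma numrad_nonneg:
  assumes "bounded_clinear_op T"
  shows "0 \<le> numrad T"
  unfolding numrad_def using numrad_bdd[OF assms(1)] by (intro cSup_upper) auto

lemma numrad_bound:
  assumes "bounded_clinear_op T"
  shows "cmod (cinner (T w) w) \<le> numrad T * (norm w)^2"
proof (cases "w = 0")
  case True
  then show ?thesis using bcl_zero[OF assms] by simp
next
  case False
  define u where "u = scaleC (complex_of_real (1 / norm w)) w"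
  have nu: "norm u = 1" using False by (simp add: u_def norm_scaleC norm_divide)
  have "cinner (T u) u = complex_of_real ((1 / norm w)^2) * cinner (T w) w"
    by (simp add: u_def bcl_scaleC[OF assms] cinner_scaleC_left cinner_scaleC_right power2_eq_square)
  then have "cmod (cinner (T u) u) = cmod (cinner (T w) w) / (norm w)^2"
    by (simp add: norm_mult norm_divide power2_eq_square)
  with numrad_ge[OF assms nu] False show ?thesis
    by (simp add: pos_divide_le_eq)
qed

lemma sa_real:
  assumes "selfadjoint_op S"
  shows "cinner (S w) w = complex_of_real (Re (cinner (S w) w))"
proof -
  have "cinner (S w) w = cnj (cinner (S w) w)"
    using assms unfolding selfadjoint_op_def by (metis cinner_conj)
  then have "Im (cinner (S w) w) = Im (cnj (cinner (S w) w))" by simp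
  then have "Im (cinner (S w) w) = 0" by simp
  then show ?thesis by (simp add: complex_eq_iff)
qed

lemma re_self: "Re (cinner x (x::'a::complex_inner)) = (norm x)^2"
  by (subst cinner_self_real) simp

lemma norm_sq_add: "(norm (u + v))^2 = (norm u)^2 + (norm v)^2 + 2 * Re (cinner u (v::'a::complex_inner))"
proof -
  have "cinner (u + v) (u + v) = cinner u u + cinner v v + (cinner u v + cnj (cinner u v))"
    by (simp add: cinner_add_left cinner_add_right cinner_conj[of v u])
  then have "Re (cinner (u + v) (u + v)) = Re (cinner u u) + Re (cinner v v) + 2 * Re (cinner u v)"
    by simp
  then show ?thesis by (simp add: re_self)
qed

lemma norm_sq_diff: "(norm (u - v))^2 = (norm u)^2 + (norm v)^2 - 2 * Re (cinner u (v::'a::complex_inner))"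
  using norm_sq_add[of u "- v"] by (simp add: cinner_minus_right)

lemma polar_re:
  assumes sa: "selfadjoint_op S" and bl: "bounded_clinear_op S"
    and N: "\<And>w. cmod (cinner (S w) w) \<le> N * (norm w)^2"
  shows "Re (cinner (S u) v) \<le> N / 2 * ((norm u)^2 + (norm v)^2)"
proof -
  have e: "cinner (S (u + v)) (u + v) - cinner (S (u - v)) (u - v) = 2 * (cinner (S u) v + cinner (S v) u)"
    by (simp add: bcl_add[OF bl] bcl_diff[OF bl] cinner_add_left cinner_add_right cinner_diff_left cinner_diff_right algebra_simps)
  have "cinner (S v) u = cnj (cinner (S u) v)"
    using sa unfolding selfadjoint_op_def by (metis cinner_conj)
  with e have "Re (cinner (S (u + v)) (u + v)) - Re (cinner (S (u - v)) (u - v)) = Re (2 * (cinner (S u) v + cnj (cinner (S u) v)))"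
    by (metis minus_complex.sel(1))
  then have "4 * Re (cinner (S u) v) = Re (cinner (S (u + v)) (u + v)) - Re (cinner (S (u - v)) (u - v))"
    by simp
  also have "\<dots> \<le> cmod (cinner (S (u + v)) (u + v)) + cmod (cinner (S (u - v)) (u - v))"
    using abs_Re_le_cmod[of "cinner (S (u + v)) (u + v)"] abs_Re_le_cmod[of "cinner (S (u - v)) (u - v)"] by linarith
  also have "\<dots> \<le> N * (norm (u + v))^2 + N * (norm (u - v))^2"
    using N[of "u+v"] N[of "u-v"] by linarith
  also have "\<dots> = 2 * N * ((norm u)^2 + (norm v)^2)"
    by (simp add: norm_sq_add norm_sq_diff algebra_simps)
  finally show ?thesis by simp
qed

lemma polar:
  assumes sa: "selfadjoint_op S" and bl: "bounded_clinear_op S"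
    and N: "\<And>w. cmod (cinner (S w) w) \<le> N * (norm w)^2"
  shows "cmod (cinner (S u) v) \<le> N / 2 * ((norm u)^2 + (norm v)^2)"
proof (cases "cinner (S u) v = 0")
  case True
  have "0 \<le> N * (norm u)^2" "0 \<le> N * (norm v)^2"
    using N[of u] N[of v] norm_ge_zero[of "cinner (S u) u"] norm_ge_zero[of "cinner (S v) v"] by linarith+
  then show ?thesis using True by (simp add: distrib_left)
next
  case False
  define c where "c = cnj (cinner (S u) v) / complex_of_real (cmod (cinner (S u) v))"
  have cm: "cmod c = 1" using False by (simp add: c_def norm_divide)
  define z where "z = cinner (S u) v"
  have "cinner (S (scaleC c u)) v = c * z"
    by (simp add: bcl_scaleC[OF bl] cinner_scaleC_left z_def)
  also have "\<dots> = z * cnj z / complex_of_real (cmod z)"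
    by (simp add: c_def z_def mult.commute)
  also have "\<dots> = complex_of_real (cmod z)"
    using False unfolding mult_cnj_cmod z_def by (simp add: power2_eq_square)
  finally have "cinner (S (scaleC c u)) v = complex_of_real (cmod (cinner (S u) v))" by (simp add: z_def)
  then have "cmod (cinner (S u) v) = Re (cinner (S (scaleC c u)) v)" by simp
  also have "\<dots> \<le> N / 2 * ((norm (scaleC c u))^2 + (norm v)^2)" by (rule polar_re[OF sa bl N])
  finally show ?thesis by (simp add: norm_scaleC cm)
qed
lemma cart_bound:
  assumes T: "bounded_clinear_op T" and sA: "selfadjoint_op A" and sB: "selfadjoint_op B"
    and TAB: "\<forall>x. T x = A x + scaleC \<i> (B x)"
  shows "cmod (cinner (A w) w) \<le> cmod (cinner (T w) w)"
    and "cmod (cinner (B w) w) \<le> cmod (cinner (T w) w)"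
    and "cinner (T w) w = complex_of_real (Re (cinner (A w) w)) + \<i> * complex_of_real (Re (cinner (B w) w))"
proof -
  have eq: "cinner (T w) w = complex_of_real (Re (cinner (A w) w)) + \<i> * complex_of_real (Re (cinner (B w) w))"
    using TAB by (simp add: cinner_add_left cinner_scaleC_left flip: sa_real[OF sA] sa_real[OF sB])
  then show "cinner (T w) w = complex_of_real (Re (cinner (A w) w)) + \<i> * complex_of_real (Re (cinner (B w) w))" .
  have "Re (cinner (T w) w) = Re (cinner (A w) w)" "Im (cinner (T w) w) = Re (cinner (B w) w)"
    using eq by simp_all
  then show "cmod (cinner (A w) w) \<le> cmod (cinner (T w) w)"
    and "cmod (cinner (B w) w) \<le> cmod (cinner (T w) w)"
    using abs_Re_le_cmod[of "cinner (T w) w"] abs_Im_le_cmod[of "cinner (T w) w"]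
      sa_real[OF sA, of w] sa_real[OF sB, of w]
    by (metis norm_of_real)+
qed

theorem corollary4p9:
  fixes T A B :: "'a::complex_hilbert \<Rightarrow> 'a" and \<theta> :: real
  assumes "bounded_clinear_op T" and "bounded_clinear_op A" and "bounded_clinear_op B"
    and "selfadjoint_op A" and "selfadjoint_op B"
    and "\<forall>x. T x = A x + scaleC \<i> (B x)"
  shows "(1/2) * numrad T
           \<le> numrad2 (block_op (\<lambda>_. 0) A (\<lambda>x. scaleC (exp (\<i> * complex_of_real \<theta>)) (B x)) (\<lambda>_. 0))
       \<and> numrad2 (block_op (\<lambda>_. 0) A (\<lambda>x. scaleC (exp (\<i> * complex_of_real \<theta>)) (B x)) (\<lambda>_. 0))
           \<le> numrad T"
proof -
  note T = assms(1) and bA = assms(2) and bB = assms(3) and sA = assms(4) and sB = assms(5)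
    and TAB = assms(6)
  define e where "e = exp (\<i> * complex_of_real \<theta>)"
  define M where "M = block_op (\<lambda>_. 0) A (\<lambda>x. scaleC e (B x)) (\<lambda>_. (0::'a))"
  define N where "N = numrad T"
  have N0: "0 \<le> N" unfolding N_def by (rule numrad_nonneg[OF T])
  have NA: "\<And>w. cmod (cinner (A w) w) \<le> N * (norm w)^2"
    using cart_bound(1)[OF T sA sB TAB] numrad_bound[OF T] unfolding N_def by (meson order_trans)
  have NB: "\<And>w. cmod (cinner (B w) w) \<le> N * (norm w)^2"
    using cart_bound(2)[OF T sA sB TAB] numrad_bound[OF T] unfolding N_def by (meson order_trans)
  have cme: "cmod e = 1" unfolding e_def by simp
  have Mz: "cinner2 (M z) z = cinner (A (snd z)) (fst z) + e * cinner (B (fst z)) (snd z)" for z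
    by (simp add: M_def block_op_def cinner2_def cinner_scaleC_left)
  have elem: "cmod (cinner2 (M z) z) \<le> N" if "norm2 z = 1" for z
  proof -
    have s1: "(norm (fst z))^2 + (norm (snd z))^2 = 1"
      using that unfolding norm2_def by (metis real_sqrt_eq_1_iff)
    have "cmod (cinner2 (M z) z) \<le> cmod (cinner (A (snd z)) (fst z)) + cmod (cinner (B (fst z)) (snd z))"
      unfolding Mz by (metis norm_triangle_ineq norm_mult cme mult_1)
    also have "\<dots> \<le> N / 2 * ((norm (snd z))^2 + (norm (fst z))^2) + N / 2 * ((norm (fst z))^2 + (norm (snd z))^2)"
      using polar[OF sA bA NA, of "snd z" "fst z"] polar[OF sB bB NB, of "fst z" "snd z"] by linarith
    also have "\<dots> = N" using s1 by (simp add: add.commute)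
    finally show ?thesis .
  qed
  have bddM: "bdd_above ({0} \<union> {cmod (cinner2 (M z) z) | z. norm2 z = 1})"
    using elem N0 by (intro bdd_aboveI[of _ N]) auto
  have upper: "numrad2 M \<le> N"
    unfolding numrad2_def using elem N0 by (intro cSup_least) auto
  have M_ge: "cmod (cinner2 (M z) z) \<le> numrad2 M" if "norm2 z = 1" for z
    unfolding numrad2_def using bddM that by (intro cSup_upper) blast+
  have M0: "0 \<le> numrad2 M"
    unfolding numrad2_def using bddM by (intro cSup_upper) auto
  define ex where "ex = exp (\<i> * complex_of_real (\<theta> / 2))"
  have cmex: "cmod ex = 1" unfolding ex_def by simp
  have eex: "e = ex * ex" unfolding e_def ex_def by (simp flip: exp_add)
  have exc: "ex * cnj ex = 1" using cmex by (simp add: mult_cnj_cmod)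
  have key: "cmod (cinner (T x) x) \<le> 2 * numrad2 M" if x1: "norm x = 1" for x
  proof -
    define a where "a = Re (cinner (A x) x)"
    define b where "b = Re (cinner (B x) x)"
    have Tab: "cinner (T x) x = complex_of_real a + \<i> * complex_of_real b"
      unfolding a_def b_def by (rule cart_bound(3)[OF T sA sB TAB])
    have ga: "cinner (A x) x = complex_of_real a" unfolding a_def by (rule sa_real[OF sA])
    have gb: "cinner (B x) x = complex_of_real b" unfolding b_def by (rule sa_real[OF sB])
    define s where "s = complex_of_real (1 / sqrt 2)"
    have ss: "s * cnj s = 1/2" unfolding s_def by (simp flip: of_real_mult)
    have gen: "cmod (complex_of_real a * d + complex_of_real b * cnj d) \<le> 2 * numrad2 M" if d1: "cmod d = 1" for d
    proof -
      define c where "c = ex * d"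
      define z where "z = (scaleC s x, scaleC (s * c) x)"
      have cmc: "cmod c = 1" unfolding c_def using cmex d1 by (simp add: norm_mult)
      have "norm2 z = 1" unfolding norm2_def z_def using cmc x1
        by (simp add: norm_scaleC norm_mult norm_divide s_def power_mult_distrib power_divide)
      then have le: "cmod (cinner2 (M z) z) \<le> numrad2 M" by (rule M_ge)
      have "cinner2 (M z) z = s * cnj s * (c * cinner (A x) x + e * cnj c * cinner (B x) x)"
        unfolding Mz z_def by (simp add: bcl_scaleC[OF bA] bcl_scaleC[OF bB] cinner_scaleC_left cinner_scaleC_right algebra_simps)
      also have "\<dots> = 1/2 * ex * (complex_of_real a * d + complex_of_real b * cnj d)"
        unfolding ss ga gb c_def eex
        by (simp add: algebra_simps) (metis (no_types, lifting) exc mult.assoc mult.left_commute mult_1 mult.commute)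
      finally have h: "cinner2 (M z) z = 1/2 * ex * (complex_of_real a * d + complex_of_real b * cnj d)" .
      have "cmod (1/2 * ex * (complex_of_real a * d + complex_of_real b * cnj d)) = 1/2 * cmod (complex_of_real a * d + complex_of_real b * cnj d)"
        unfolding norm_mult cmex by simp
      then have "cmod (cinner2 (M z) z) = 1/2 * cmod (complex_of_real a * d + complex_of_real b * cnj d)"
        unfolding h .
      with le show ?thesis by simp
    qed
    have g1: "\<bar>a + b\<bar> \<le> 2 * numrad2 M" using gen[of 1] by (simp flip: of_real_add)
    have g2: "\<bar>a - b\<bar> \<le> 2 * numrad2 M"
    proof -
      have "complex_of_real a * \<i> + complex_of_real b * cnj \<i> = \<i> * complex_of_real (a - b)"
        by (simp add: algebra_simps)
      then show ?thesis using gen[of \<i>] by (simp add: norm_mult flip: of_real_diff)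
    qed
    have "cmod (cinner (T x) x) \<le> \<bar>a\<bar> + \<bar>b\<bar>"
      unfolding Tab by (metis norm_triangle_ineq norm_of_real norm_mult norm_ii mult_1)
    also have "\<dots> \<le> 2 * numrad2 M" using g1 g2 by linarith
    finally show ?thesis .
  qed
  have lower: "N \<le> 2 * numrad2 M"
    unfolding N_def numrad_def using key M0 by (intro cSup_least) auto
  show ?thesis using upper lower unfolding M_def e_def N_def by simp
qed
end
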